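(* Let $\mathbf{k}$ be an algebraically closed field with $\mathrm{char}(\mathbf{k})\neq 2$ and let $E=\bigwedge E_1$ be the exterior algebra of a $5$-dimensional $\mathbf{k}$-vector space $E_1$. Let $U\subseteq E_2$ be a $3$-dimensional subspace such that $\dim_{\mathbf{k}}(U\wedge E_1)\ge 7$. Then $U\subseteq\bigwedge^2W$ for some $3$-dimensional subspace $W\subseteq E_1$ if and only if $U^2=0$, i.e. $u\wedge u'=0$ for all $u,u'\in U$. *)

theory Defs
  imports "HOL-Computational_Algebra.Polynomial" "HOL-Library.Function_Algebras"
begin

text \<open>Concrete model of the exterior algebra E of E_1 = k^5 with basis e_0,...,e_4.
  An element of E is a function from finite sets of indices to k: x S is the coefficient
  of e_S = e_{s_1} wedge ... wedge e_{s_p} (s_1 < ... < s_p). Only sets S contained in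
  {0..<5} are relevant; the graded pieces ext_grade p select the homogeneous elements.\<close>

type_synonym 'k ext = "nat set \<Rightarrow> 'k"

definition escale :: "'k::field \<Rightarrow> 'k ext \<Rightarrow> 'k ext" where
  "escale c x = (\<lambda>S. c * x S)"

definition ext_grade :: "nat \<Rightarrow> ('k::field) ext set" where
  "ext_grade p = {x. \<forall>S. x S \<noteq> 0 \<longrightarrow> S \<subseteq> {..<5} \<and> card S = p}"

text \<open>Sign of e_A wedge e_B relative to e_{A union B} (A, B disjoint).\<close>
definition shuffle_sign :: "nat set \<Rightarrow> nat set \<Rightarrow> 'k::field" where
  "shuffle_sign A B = (-1) ^ card {(a, b). a \<in> A \<and> b \<in> B \<and> b < a}"

definition wedge :: "'k::field ext \<Rightarrow> 'k ext \<Rightarrow> 'k ext" where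
  "wedge x y = (\<lambda>S. \<Sum>A\<in>Pow S. shuffle_sign A (S - A) * x A * y (S - A))"

abbreviation ext_dim :: "'k::field ext set \<Rightarrow> nat" where
  "ext_dim V \<equiv> vector_space.dim escale V"

abbreviation ext_span :: "'k::field ext set \<Rightarrow> 'k ext set" where
  "ext_span V \<equiv> module.span escale V"

abbreviation ext_subspace :: "'k::field ext set \<Rightarrow> bool" where
  "ext_subspace V \<equiv> module.subspace escale V"

definition wedge_sp :: "'k::field ext set \<Rightarrow> 'k ext set \<Rightarrow> 'k ext set" where
  "wedge_sp U V = ext_span {wedge u v | u v. u \<in> U \<and> v \<in> V}"

end

theory Submission
  imports Defs
begin

lemma vs: "vector_space (escale :: 'k::field \<Rightarrow> 'k ext \<Rightarrow> 'k ext)"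
  by unfold_locales (auto simp: escale_def fun_eq_iff algebra_simps)

interpretation ext: vector_space "escale :: 'k::field \<Rightarrow> 'k ext \<Rightarrow> 'k ext"
  by (rule vs)

abbreviation G where "G n \<equiv> ext_grade n"

lemma escale_apply[simp]: "escale c x S = c * x S" by (simp add: escale_def)

lemma wedge_add_left: "wedge (x + y) z = wedge x z + wedge y z"
  by (simp add: wedge_def fun_eq_iff algebra_simps sum.distrib)
lemma wedge_add_right: "wedge x (y + z) = wedge x y + wedge x z"
  by (simp add: wedge_def fun_eq_iff algebra_simps sum.distrib)
lemma wedge_scale_left: "wedge (escale c x) z = escale c (wedge x z)"
  by (simp add: wedge_def fun_eq_iff algebra_simps sum_distrib_left)
lemma wedge_scale_right: "wedge x (escale c z) = escale c (wedge x z)"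
  by (simp add: wedge_def fun_eq_iff algebra_simps sum_distrib_left)
lemma wedge_zero_left[simp]: "wedge 0 z = 0"
  by (simp add: wedge_def fun_eq_iff)
lemma wedge_zero_right[simp]: "wedge z 0 = 0"
  by (simp add: wedge_def fun_eq_iff)
lemma wedge_minus_left: "wedge (- x) z = - wedge x z"
  by (simp add: wedge_def fun_eq_iff sum_negf)
lemma wedge_minus_right: "wedge z (- x) = - wedge z x"
  by (simp add: wedge_def fun_eq_iff sum_negf)
lemma wedge_diff_left: "wedge (x - y) z = wedge x z - wedge y z"
  by (simp add: wedge_def fun_eq_iff algebra_simps sum_subtractf)
lemma wedge_diff_right: "wedge z (x - y) = wedge z x - wedge z y"
  by (simp add: wedge_def fun_eq_iff algebra_simps sum_subtractf)

lemma sign_nz[simp]: "(shuffle_sign A B :: 'k::field) \<noteq> 0"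
  by (simp add: shuffle_sign_def)

lemma sign_sq[simp]: "(shuffle_sign A B :: 'k::field) * shuffle_sign A B = 1"
  by (simp add: shuffle_sign_def flip: power_add mult_2)

lemma wedge_infinite: "infinite S \<Longrightarrow> wedge x y S = 0"
  by (simp add: wedge_def)

lemma grade_wedge:
  assumes "x \<in> G p" "y \<in> G q" shows "wedge x y \<in> G (p+q)"
  unfolding ext_grade_def
proof (intro CollectI allI impI)
  fix S assume nz: "wedge x y S \<noteq> 0"
  then have fin: "finite S" using wedge_infinite by blast
  from nz obtain A where A: "A \<in> Pow S" "x A \<noteq> 0" "y (S - A) \<noteq> 0"
    unfolding wedge_def by (metis (no_types, lifting) mult_eq_0_iff sum.neutral)
  with assms have "A \<subseteq> {..<5}" "card A = p" "S - A \<subseteq> {..<5}" "card (S - A) = q"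
    unfolding ext_grade_def by auto
  moreover have "card S = card A + card (S - A)"
    using A(1) fin by (metis PowD card_Diff_subset card_mono diff_add_inverse finite_subset le_add_diff_inverse)
  ultimately show "S \<subseteq> {..<5} \<and> card S = p + q" using A(1) by auto
qed

lemma grade_subspace: "ext_subspace (G n)"
  unfolding ext.subspace_def ext_grade_def
  by (auto, (metis add.right_neutral subsetD lessThan_iff)+)

lemma filter_insert': "{b \<in> insert x B. P b} = (if P x then insert x {b \<in> B. P b} else {b \<in> B. P b})"
  by auto
lemma coll_eq_conj: "{b. b = j \<and> P b} = (if P j then {j} else {})" by auto
lemma coll_eq_disj: "{b. (b = j \<or> Q b) \<and> P b} = (if P j then insert j {b. Q b \<and> P b} else {b. Q b \<and> P b})" by auto
lemma filter_empty': "{b \<in> {}. P b} = {}" by auto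

lemma sign_card:
  assumes "finite A" "finite B"
  shows "(shuffle_sign A B :: 'k::field) = (-1) ^ (\<Sum>a\<in>A. card {b \<in> B. b < a})"
proof -
  have "{(a, b). a \<in> A \<and> b \<in> B \<and> b < a} = Sigma A (\<lambda>a. {b \<in> B. b < a})" by auto
  then have "card {(a, b). a \<in> A \<and> b \<in> B \<and> b < a} = (\<Sum>a\<in>A. card {b \<in> B. b < a})"
    using assms by (simp add: card_SigmaI)
  then show ?thesis by (simp add: shuffle_sign_def)
qed

lemma G1_card: "x \<in> G 1 \<Longrightarrow> x A \<noteq> 0 \<Longrightarrow> \<exists>m. A = {m} \<and> m < 5"
  unfolding ext_grade_def by (auto simp: card_1_singleton_iff)

lemma wedge_G1_left:
  assumes "x \<in> G 1" "finite S"
  shows "wedge x y S = (\<Sum>m\<in>S. shuffle_sign {m} (S - {m}) * x {m} * y (S - {m}))"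
proof -
  let ?f = "\<lambda>A. shuffle_sign A (S - A) * x A * y (S - A)"
  have "wedge x y S = sum ?f (Pow S)" by (simp add: wedge_def)
  also have "\<dots> = sum ?f ((\<lambda>m. {m}) ` S)"
  proof (rule sum.mono_neutral_right)
    show "\<forall>A\<in>Pow S - (\<lambda>m. {m}) ` S. ?f A = 0"
      using G1_card[OF assms(1)] by fastforce
  qed (use assms in auto)
  also have "\<dots> = (\<Sum>m\<in>S. ?f {m})" by (subst sum.reindex) (auto simp: inj_on_def)
  finally show ?thesis .
qed

lemma wedge_G1_right:
  assumes "y \<in> G 1" "finite S"
  shows "wedge x y S = (\<Sum>m\<in>S. shuffle_sign (S - {m}) {m} * x (S - {m}) * y {m})"
proof -
  let ?f = "\<lambda>A. shuffle_sign A (S - A) * x A * y (S - A)"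
  have "wedge x y S = sum ?f (Pow S)" by (simp add: wedge_def)
  also have "\<dots> = sum ?f ((\<lambda>m. S - {m}) ` S)"
  proof (rule sum.mono_neutral_right)
    show "\<forall>A\<in>Pow S - (\<lambda>m. S - {m}) ` S. ?f A = 0"
    proof
      fix A assume A: "A \<in> Pow S - (\<lambda>m. S - {m}) ` S"
      show "?f A = 0"
      proof (rule ccontr)
        assume "?f A \<noteq> 0"
        then have "y (S - A) \<noteq> 0" by auto
        then obtain m where "S - A = {m}" using G1_card[OF assms(1)] by blast
        then have "A = S - {m}" "m \<in> S" using A by auto
        then show False using A by auto
      qed
    qed
  qed (use assms in auto)
  also have "\<dots> = (\<Sum>m\<in>S. ?f (S - {m}))"
    by (subst sum.reindex) (auto simp: inj_on_def)
  also have "\<dots> = (\<Sum>m\<in>S. shuffle_sign (S - {m}) {m} * x (S - {m}) * y {m})"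
    by (rule sum.cong) (auto simp: Diff_Diff_Int Int_absorb1)
  finally show ?thesis .
qed

lemma G2_card: "x \<in> G 2 \<Longrightarrow> x A \<noteq> 0 \<Longrightarrow> \<exists>a b. A = {a,b} \<and> a < b \<and> b < 5"
  unfolding ext_grade_def
  by (auto simp: card_2_iff) (metis insert_commute insert_subset lessThan_iff linorder_neqE_nat)

lemma wedge_G2_left:
  assumes "x \<in> G 2" "finite S"
  shows "wedge x y S = (\<Sum>p\<in>{(a,b). a \<in> S \<and> b \<in> S \<and> a < b}. 
          shuffle_sign {fst p, snd p} (S - {fst p, snd p}) * x {fst p, snd p} * y (S - {fst p, snd p}))"
proof -
  let ?f = "\<lambda>A. shuffle_sign A (S - A) * x A * y (S - A)"
  have "wedge x y S = sum ?f (Pow S)" by (simp add: wedge_def)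
  also have "\<dots> = sum ?f ((\<lambda>p. {fst p, snd p}) ` {(a,b). a \<in> S \<and> b \<in> S \<and> a < b})"
  proof (rule sum.mono_neutral_right)
    show "\<forall>A\<in>Pow S - (\<lambda>p. {fst p, snd p}) ` {(a,b). a \<in> S \<and> b \<in> S \<and> a < b}. ?f A = 0"
    proof
      fix A assume A: "A \<in> Pow S - (\<lambda>p. {fst p, snd p}) ` {(a,b). a \<in> S \<and> b \<in> S \<and> a < b}"
      show "?f A = 0"
      proof (rule ccontr)
        assume "?f A \<noteq> 0"
        then have "x A \<noteq> 0" by auto
        then obtain a b where "A = {a,b}" "a < b" using G2_card[OF assms(1)] by blast
        then show False using A by (auto simp: image_iff)
      qed
    qed
  qed (use assms in auto)
  also have "\<dots> = (\<Sum>p\<in>{(a,b). a \<in> S \<and> b \<in> S \<and> a < b}. ?f {fst p, snd p})"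
  proof (subst sum.reindex)
    show "inj_on (\<lambda>p. {fst p, snd p}) {(a, b). a \<in> S \<and> b \<in> S \<and> a < b}"
      by (auto simp: inj_on_def doubleton_eq_iff)
  qed auto
  finally show ?thesis .
qed

lemma F2:
  assumes "a \<in> G 1" "b \<in> G 1" "i < j"
  shows "wedge a b {i,j} = a {i} * b {j} - a {j} * b {i}"
  using assms by (simp add: wedge_G1_left sign_card filter_insert' coll_eq_conj coll_eq_disj insert_Diff_if)

lemma F3:
  assumes "P \<in> G 2" "c \<in> G 1" "i < j" "j < k"
  shows "wedge P c {i,j,k} = P {i,j} * c {k} - P {i,k} * c {j} + P {j,k} * c {i}"
  using assms by (simp add: wedge_G1_right sign_card filter_insert' coll_eq_conj coll_eq_disj insert_Diff_if insert_commute)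

lemma F4':
  assumes "X \<in> G 3" "d \<in> G 1" "i < j" "j < k" "k < l"
  shows "wedge X d {i,j,k,l} = X {i,j,k} * d {l} - X {i,j,l} * d {k} + X {i,k,l} * d {j} - X {j,k,l} * d {i}"
  using assms by (simp add: wedge_G1_right sign_card filter_insert' coll_eq_conj coll_eq_disj insert_Diff_if insert_commute)


lemma pairs4:
  assumes "i < j" "j < k" "k < (l::nat)"
  shows "{(a,b). a \<in> {i,j,k,l} \<and> b \<in> {i,j,k,l} \<and> a < b} = {(i,j),(i,k),(i,l),(j,k),(j,l),(k,l)}"
  using assms by auto

lemma sgn2:
  assumes "i < j" "j < k" "k < (l::nat)"
  shows "(shuffle_sign {i,j} {k,l} :: 'k::field) = 1"
    "(shuffle_sign {i,k} {j,l} :: 'k::field) = -1"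
    "(shuffle_sign {i,l} {j,k} :: 'k::field) = 1"
    "(shuffle_sign {j,k} {i,l} :: 'k::field) = 1"
    "(shuffle_sign {j,l} {i,k} :: 'k::field) = -1"
    "(shuffle_sign {k,l} {i,j} :: 'k::field) = 1"
  using assms by (simp_all add: sign_card coll_eq_conj coll_eq_disj)

lemma diff4:
  assumes "i < j" "j < k" "k < (l::nat)"
  shows "{i,j,k,l} - {i,j} = {k,l}" "{i,j,k,l} - {i,k} = {j,l}" "{i,j,k,l} - {i,l} = {j,k}"
    "{i,j,k,l} - {j,k} = {i,l}" "{i,j,k,l} - {j,l} = {i,k}" "{i,j,k,l} - {k,l} = {i,j}"
  using assms by auto

lemma F4:
  assumes "P \<in> G 2" "Q \<in> G 2" "i < j" "j < k" "k < l"
  shows "wedge P Q {i,j,k,l} = P {i,j} * Q {k,l} - P {i,k} * Q {j,l} + P {i,l} * Q {j,k}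
      + P {j,k} * Q {i,l} - P {j,l} * Q {i,k} + P {k,l} * Q {i,j}"
proof -
  have "wedge P Q {i,j,k,l} = (\<Sum>p\<in>{(i,j),(i,k),(i,l),(j,k),(j,l),(k,l)}. 
          shuffle_sign {fst p, snd p} ({i,j,k,l} - {fst p, snd p}) * P {fst p, snd p} * Q ({i,j,k,l} - {fst p, snd p}))"
    using assms by (simp only: wedge_G2_left pairs4 finite.emptyI finite_insert)
  also have "\<dots> = shuffle_sign {i,j} ({i,j,k,l} - {i,j}) * P {i,j} * Q ({i,j,k,l} - {i,j})
     + (shuffle_sign {i,k} ({i,j,k,l} - {i,k}) * P {i,k} * Q ({i,j,k,l} - {i,k})
     + (shuffle_sign {i,l} ({i,j,k,l} - {i,l}) * P {i,l} * Q ({i,j,k,l} - {i,l})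
     + (shuffle_sign {j,k} ({i,j,k,l} - {j,k}) * P {j,k} * Q ({i,j,k,l} - {j,k})
     + (shuffle_sign {j,l} ({i,j,k,l} - {j,l}) * P {j,l} * Q ({i,j,k,l} - {j,l})
     + shuffle_sign {k,l} ({i,j,k,l} - {k,l}) * P {k,l} * Q ({i,j,k,l} - {k,l})))))"
    using assms by (subst sum.insert, simp, simp)+ simp
  also have "\<dots> = P {i,j} * Q {k,l} - P {i,k} * Q {j,l} + P {i,l} * Q {j,k}
      + P {j,k} * Q {i,l} - P {j,l} * Q {i,k} + P {k,l} * Q {i,j}"
    using assms by (simp only: diff4 sgn2) simp
  finally show ?thesis .
qed

lemma card2_sorted: "card S = 2 \<Longrightarrow> \<exists>i j::nat. i < j \<and> S = {i,j}"
  by (auto simp: card_2_iff) (metis insert_commute linorder_neqE_nat)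

lemma len3: "length xs = 3 \<Longrightarrow> \<exists>a b c. xs = [a,b,c]"
  by (auto simp: numeral_3_eq_3 length_Suc_conv)
lemma len4: "length xs = 4 \<Longrightarrow> \<exists>a b c d. xs = [a,b,c,d]"
  by (auto simp: numeral_Bit0 length_Suc_conv)

lemma card3_sorted:
  assumes "card S = 3" shows "\<exists>i j k::nat. i < j \<and> j < k \<and> S = {i,j,k}"
proof -
  have fin: "finite S" using assms card.infinite by fastforce
  let ?xs = "sorted_list_of_set S"
  have len: "length ?xs = 3" using assms fin by simp
  then obtain i j k where xs: "?xs = [i,j,k]" using len3 by blast
  have "sorted_wrt (<) ?xs" by simp
  then have "i < j" "j < k" unfolding xs by auto
  moreover have "S = {i,j,k}" using fin set_sorted_list_of_set[OF fin] unfolding xs by simp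
  ultimately show ?thesis by blast
qed
lemma card4_sorted:
  assumes "card S = 4" shows "\<exists>i j k l::nat. i < j \<and> j < k \<and> k < l \<and> S = {i,j,k,l}"
proof -
  have fin: "finite S" using assms card.infinite by fastforce
  let ?xs = "sorted_list_of_set S"
  have len: "length ?xs = 4" using assms fin by simp
  then obtain i j k l where xs: "?xs = [i,j,k,l]" using len4 by blast
  have "sorted_wrt (<) ?xs" by simp
  then have "i < j" "j < k" "k < l" unfolding xs by auto
  moreover have "S = {i,j,k,l}" using fin set_sorted_list_of_set[OF fin] unfolding xs by simp
  ultimately show ?thesis by blast
qed

lemma grade_out: "x \<in> G n \<Longrightarrow> \<not> (S \<subseteq> {..<5} \<and> card S = n) \<Longrightarrow> x S = 0"
  unfolding ext_grade_def by auto

lemma ext1: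
  assumes "x \<in> G 1" "y \<in> G 1" "\<And>i. i < 5 \<Longrightarrow> x {i} = y {i}"
  shows "x = y"
proof
  fix S show "x S = y S"
  proof (cases "S \<subseteq> {..<5} \<and> card S = 1")
    case True then obtain i where ij: "S = {i}" by (auto simp: card_1_singleton_iff)
    then have "i < 5" using True by auto
    then show ?thesis using assms(3)[of i] ij by simp
  next
    case False then show ?thesis using assms(1,2) by (simp add: grade_out)
  qed
qed

lemma ext2:
  assumes "x \<in> G 2" "y \<in> G 2" "\<And>i j. i < j \<Longrightarrow> j < 5 \<Longrightarrow> x {i,j} = y {i,j}"
  shows "x = y"
proof
  fix S show "x S = y S"
  proof (cases "S \<subseteq> {..<5} \<and> card S = 2")
    case True then have "card S = 2" by simp
    from card2_sorted[OF this] obtain i j where ij: "S = {i,j}" "i < j" by (elim exE conjE) simp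
    then have "j < 5" using True by auto
    then show ?thesis using assms(3)[of i j] ij by simp
  next
    case False then show ?thesis using assms(1,2) by (simp add: grade_out)
  qed
qed

lemma ext3:
  assumes "x \<in> G 3" "y \<in> G 3" "\<And>i j k. i < j \<Longrightarrow> j < k \<Longrightarrow> k < 5 \<Longrightarrow> x {i,j,k} = y {i,j,k}"
  shows "x = y"
proof
  fix S show "x S = y S"
  proof (cases "S \<subseteq> {..<5} \<and> card S = 3")
    case True then have "card S = 3" by simp
    from card3_sorted[OF this] obtain i j k where ij: "S = {i,j,k}" "i < j" "j < k" by (elim exE conjE) simp
    then have "k < 5" using True by auto
    then show ?thesis using assms(3)[of i j k] ij by simp
  next
    case False then show ?thesis using assms(1,2) by (simp add: grade_out)
  qed
qed

lemma ext4:
  assumes "x \<in> G 4" "y \<in> G 4" "\<And>i j k l. i < j \<Longrightarrow> j < k \<Longrightarrow> k < l \<Longrightarrow> l < 5 \<Longrightarrow> x {i,j,k,l} = y {i,j,k,l}"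
  shows "x = y"
proof
  fix S show "x S = y S"
  proof (cases "S \<subseteq> {..<5} \<and> card S = 4")
    case True then have "card S = 4" by simp
    from card4_sorted[OF this] obtain i j k l where ij: "S = {i,j,k,l}" "i < j" "j < k" "k < l" by (elim exE conjE) simp
    then have "l < 5" using True by auto
    then show ?thesis using assms(3)[of i j k l] ij by simp
  next
    case False then show ?thesis using assms(1,2) by (simp add: grade_out)
  qed
qed

lemma zero_G[simp]: "0 \<in> G n" by (simp add: ext_grade_def)

lemma G11: "a \<in> G 1 \<Longrightarrow> b \<in> G 1 \<Longrightarrow> wedge a b \<in> G 2"
  proof - assume "a \<in> G 1" "b \<in> G 1" then have "wedge a b \<in> G (1+1)" by (rule grade_wedge) moreover have "(1+1::nat) = 2" by simp ultimately show ?thesis by metis qed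
lemma G21: "a \<in> G 2 \<Longrightarrow> b \<in> G 1 \<Longrightarrow> wedge a b \<in> G 3"
  proof - assume "a \<in> G 2" "b \<in> G 1" then have "wedge a b \<in> G (2+1)" by (rule grade_wedge) moreover have "(2+1::nat) = 3" by simp ultimately show ?thesis by metis qed
lemma G22: "a \<in> G 2 \<Longrightarrow> b \<in> G 2 \<Longrightarrow> wedge a b \<in> G 4"
  proof - assume "a \<in> G 2" "b \<in> G 2" then have "wedge a b \<in> G (2+2)" by (rule grade_wedge) moreover have "(2+2::nat) = 4" by simp ultimately show ?thesis by metis qed
lemma G31: "a \<in> G 3 \<Longrightarrow> b \<in> G 1 \<Longrightarrow> wedge a b \<in> G 4"
  proof - assume "a \<in> G 3" "b \<in> G 1" then have "wedge a b \<in> G (3+1)" by (rule grade_wedge) moreover have "(3+1::nat) = 4" by simp ultimately show ?thesis by metis qed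

lemma wedge_self1: assumes "a \<in> G 1" shows "wedge a a = 0"
proof (rule ext2)
  show "wedge a a \<in> G 2" using G11 assms by blast
  fix i j :: nat assume "i < j" "j < 5"
  then show "wedge a a {i,j} = 0 {i,j}" using F2[OF assms assms \<open>i < j\<close>] by (simp add: mult.commute)
qed simp

lemma wedge_anti1: assumes "a \<in> G 1" "b \<in> G 1" shows "wedge b a = - wedge a b"
proof (rule ext2)
  show "wedge b a \<in> G 2" using G11 assms by blast
  show "- wedge a b \<in> G 2" using G11 assms ext.subspace_neg[OF grade_subspace] by blast
  fix i j :: nat assume "i < j" "j < 5"
  then show "wedge b a {i,j} = (- wedge a b) {i,j}" 
    using F2[OF assms \<open>i < j\<close>] F2[OF assms(2,1) \<open>i < j\<close>] by (simp add: mult.commute)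
qed

lemma W3:
  assumes "a \<in> G 1" "b \<in> G 1" "c \<in> G 1" "i < j" "j < k"
  shows "wedge (wedge a b) c {i,j,k} = (a{i}*b{j} - a{j}*b{i})*c{k} - (a{i}*b{k} - a{k}*b{i})*c{j} + (a{j}*b{k} - a{k}*b{j})*c{i}"
proof -
  have ik: "i < k" using assms by simp
  show ?thesis using F3[OF G11[OF assms(1,2)] assms(3-5)] F2[OF assms(1,2) assms(4)] F2[OF assms(1,2) ik] F2[OF assms(1,2) assms(5)]
    by simp
qed

lemma W4:
  assumes "a \<in> G 1" "b \<in> G 1" "c \<in> G 1" "d \<in> G 1" "i < j" "j < k" "k < l"
  shows "wedge (wedge a b) (wedge c d) {i,j,k,l} =
      (a{i}*b{j} - a{j}*b{i}) * (c{k}*d{l} - c{l}*d{k}) - (a{i}*b{k} - a{k}*b{i}) * (c{j}*d{l} - c{l}*d{j})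
    + (a{i}*b{l} - a{l}*b{i}) * (c{j}*d{k} - c{k}*d{j}) + (a{j}*b{k} - a{k}*b{j}) * (c{i}*d{l} - c{l}*d{i})
    - (a{j}*b{l} - a{l}*b{j}) * (c{i}*d{k} - c{k}*d{i}) + (a{k}*b{l} - a{l}*b{k}) * (c{i}*d{j} - c{j}*d{i})"
proof -
  have o: "i < k" "i < l" "j < l" using assms by simp_all
  show ?thesis using F4[OF G11[OF assms(1,2)] G11[OF assms(3,4)] assms(5-7)]
     F2[OF assms(1,2) assms(5)] F2[OF assms(1,2) o(1)] F2[OF assms(1,2) o(2)]
     F2[OF assms(1,2) assms(6)] F2[OF assms(1,2) o(3)] F2[OF assms(1,2) assms(7)]
     F2[OF assms(3,4) assms(5)] F2[OF assms(3,4) o(1)] F2[OF assms(3,4) o(2)]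
     F2[OF assms(3,4) assms(6)] F2[OF assms(3,4) o(3)] F2[OF assms(3,4) assms(7)]
    by simp
qed

lemma G1_lin: "a \<in> G 1 \<Longrightarrow> b \<in> G 1 \<Longrightarrow> escale \<alpha> a + escale \<beta> b \<in> G 1"
  by (meson ext.subspace_add ext.subspace_scale grade_subspace)
lemma G_scale: "a \<in> G n \<Longrightarrow> escale \<alpha> a \<in> G n"
  by (meson ext.subspace_scale grade_subspace)
lemma G_add: "a \<in> G n \<Longrightarrow> b \<in> G n \<Longrightarrow> a + b \<in> G n"
  by (meson ext.subspace_add grade_subspace)
lemma G_diff: "a \<in> G n \<Longrightarrow> b \<in> G n \<Longrightarrow> a - b \<in> G n"
  by (meson ext.subspace_diff grade_subspace)
lemma G_neg: "a \<in> G n \<Longrightarrow> - a \<in> G n"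
  by (meson ext.subspace_neg grade_subspace)

lemma wedge_aba: assumes "a \<in> G 1" "b \<in> G 1" shows "wedge (wedge a b) a = 0"
proof (rule ext3)
  show "wedge (wedge a b) a \<in> G 3" using G21 G11 assms by blast
  fix i j k :: nat assume "i < j" "j < k" "k < 5"
  then show "wedge (wedge a b) a {i,j,k} = 0 {i,j,k}" using W3[OF assms assms(1)] by (simp add: algebra_simps)
qed simp

lemma wedge_abb: assumes "a \<in> G 1" "b \<in> G 1" shows "wedge (wedge a b) b = 0"
proof (rule ext3)
  show "wedge (wedge a b) b \<in> G 3" using G21 G11 assms by blast
  fix i j k :: nat assume "i < j" "j < k" "k < 5"
  then show "wedge (wedge a b) b {i,j,k} = 0 {i,j,k}" using W3[OF assms assms(2)] by (simp add: algebra_simps)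
qed simp

lemma wedge_share:
  assumes "a \<in> G 1" "b \<in> G 1" "c \<in> G 1" "d \<in> G 1" "a = c \<or> a = d \<or> b = c \<or> b = d"
  shows "wedge (wedge a b) (wedge c d) = 0"
proof (rule ext4)
  show "wedge (wedge a b) (wedge c d) \<in> G 4" using G22 G11 assms by blast
  fix i j k l :: nat assume "i < j" "j < k" "k < l" "l < 5"
  then show "wedge (wedge a b) (wedge c d) {i,j,k,l} = 0 {i,j,k,l}" using W4[OF assms(1-4)] assms(5)
    by (elim disjE; simp add: algebra_simps)
qed simp

lemma pl_sorted_le:
  fixes P :: "nat \<Rightarrow> nat \<Rightarrow> 'k::field"
  assumes diag: "\<And>a. P a a = 0"
    and srt: "\<And>a b c d. a < b \<Longrightarrow> b < c \<Longrightarrow> c < d \<Longrightarrow> d < 5 \<Longrightarrow> P a b * P c d - P a c * P b d + P a d * P b c = 0"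
    and o: "a \<le> b" "b \<le> c" "c \<le> d" "d < 5"
  shows "P a b * P c d - P a c * P b d + P a d * P b c = 0"
proof (cases "a = b \<or> b = c \<or> c = d")
  case True then show ?thesis by (elim disjE) (simp_all add: diag)
next
  case False then show ?thesis using o srt[of a b c d] by simp
qed

lemma pl_general:
  fixes P :: "nat \<Rightarrow> nat \<Rightarrow> 'k::field"
  assumes anti: "\<And>a b. P a b = - P b a" and diag: "\<And>a. P a a = 0"
    and srt: "\<And>a b c d. a < b \<Longrightarrow> b < c \<Longrightarrow> c < d \<Longrightarrow> d < 5 \<Longrightarrow> P a b * P c d - P a c * P b d + P a d * P b c = 0"
  shows "k < 5 \<Longrightarrow> l < 5 \<Longrightarrow> x < 5 \<Longrightarrow> y < 5 \<Longrightarrow> P k l * P x y - P k x * P l y + P k y * P l x = 0"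
proof -
  have A: "P a b * P c d - P a c * P b d + P a d * P b c = 0" if "a \<le> b" "b \<le> c" "c \<le> d" "d < 5" for a b c d
    using pl_sorted_le[OF diag srt that] .
  have La: "P k l * P x y - P k x * P l y + P k y * P l x = 0"
    if b: "k < 5" "l < 5" "x < 5" "y < 5" and kl: "k \<le> l" and xy: "x \<le> y" and kx: "k \<le> x" for k l x y
  proof -
    consider "l \<le> x" | "x < l" "l \<le> y" | "y < l" by linarith
    then show ?thesis
    proof cases
      case 1 then show ?thesis using A[of k l x y] kl xy b by simp
    next
      case 2
      have "P k x * P l y - P k l * P x y + P k y * P x l = 0" using A[of k x l y] 2 kx b by simp
      moreover have "P k l * P x y - P k x * P l y + P k y * P l x = - (P k x * P l y - P k l * P x y + P k y * P x l)"
        by (simp add: anti[of x l] algebra_simps)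
      ultimately show ?thesis by simp
    next
      case 3
      have "P k x * P y l - P k y * P x l + P k l * P x y = 0" using A[of k x y l] 3 kx xy b by simp
      moreover have "P k l * P x y - P k x * P l y + P k y * P l x = P k x * P y l - P k y * P x l + P k l * P x y"
        by (simp add: anti[of x l] anti[of y l] algebra_simps)
      ultimately show ?thesis by simp
    qed
  qed
  have Lb: "P k l * P x y - P k x * P l y + P k y * P l x = 0"
    if b: "k < 5" "l < 5" "x < 5" "y < 5" and kl: "k \<le> l" and xy: "x \<le> y" for k l x y
  proof (cases "k \<le> x")
    case True then show ?thesis using La b kl xy by blast
  next
    case False
    have "P x y * P k l - P x k * P y l + P x l * P y k = 0" using La[of x y k l] False b kl xy by simp
    moreover have "P k l * P x y - P k x * P l y + P k y * P l x = P x y * P k l - P x k * P y l + P x l * P y k"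
      by (simp add: anti[of x k] anti[of y l] anti[of x l] anti[of y k] algebra_simps)
    ultimately show ?thesis by simp
  qed
  have Lc: "P k l * P x y - P k x * P l y + P k y * P l x = 0"
    if b: "k < 5" "l < 5" "x < 5" "y < 5" and xy: "x \<le> y" for k l x y
  proof (cases "k \<le> l")
    case True then show ?thesis using Lb b xy by blast
  next
    case False
    have "P l k * P x y - P l x * P k y + P l y * P k x = 0" using Lb[of l k x y] False b xy by simp
    moreover have "P k l * P x y - P k x * P l y + P k y * P l x = - (P l k * P x y - P l x * P k y + P l y * P k x)"
      by (simp add: anti[of l k] algebra_simps)
    ultimately show ?thesis by simp
  qed
  assume b: "k < 5" "l < 5" "x < 5" "y < 5"
  show ?thesis
  proof (cases "x \<le> y")
    case True then show ?thesis using Lc b by blast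
  next
    case False
    have "P k l * P y x - P k y * P l x + P k x * P l y = 0" using Lc[of k l y x] False b by simp
    moreover have "P k l * P x y - P k x * P l y + P k y * P l x = - (P k l * P y x - P k y * P l x + P k x * P l y)"
      by (simp add: anti[of y x] algebra_simps)
    ultimately show ?thesis by simp
  qed
qed


definition vec :: "(nat \<Rightarrow> 'k::field) \<Rightarrow> 'k ext" where
  "vec f = (\<lambda>S. if is_singleton S \<and> the_elem S < 5 then f (the_elem S) else 0)"

lemma vec_G1: "vec f \<in> G 1"
  unfolding ext_grade_def vec_def by (auto simp: is_singleton_def)

lemma vec_at: "m < 5 \<Longrightarrow> vec f {m} = f m"
  by (simp add: vec_def)

lemma nonzero2:
  assumes "u \<in> G 2" "u \<noteq> 0" shows "\<exists>i j. i < j \<and> j < 5 \<and> u {i,j} \<noteq> 0"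
proof (rule ccontr)
  assume "\<not> ?thesis"
  then have "u = 0" by (intro ext2[OF assms(1) zero_G]) auto
  then show False using assms by simp
qed

lemma nonzero1:
  assumes "u \<in> G 1" "u \<noteq> 0" shows "\<exists>i. i < 5 \<and> u {i} \<noteq> 0"
proof (rule ccontr)
  assume "\<not> ?thesis"
  then have "u = 0" by (intro ext1[OF assms(1) zero_G]) auto
  then show False using assms by simp
qed

lemma nonzero3:
  assumes "u \<in> G 3" "u \<noteq> 0" shows "\<exists>i j k. i < j \<and> j < k \<and> k < 5 \<and> u {i,j,k} \<noteq> 0"
proof (rule ccontr)
  assume "\<not> ?thesis"
  then have "u = 0" by (intro ext3[OF assms(1) zero_G]) auto
  then show False using assms by simp
qed

lemma DEC:
  assumes two: "(2::'k::field) \<noteq> 0" and u: "(u::'k ext) \<in> G 2" "u \<noteq> 0" "wedge u u = 0"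
  shows "\<exists>a b. a \<in> G 1 \<and> b \<in> G 1 \<and> u = wedge a b"
proof -
  obtain k l where kl: "k < l" "l < 5" "u {k,l} \<noteq> 0" using nonzero2[OF u(1,2)] by blast
  define P where "P x y = (if x < y then u {x,y} else if y < x then - u {x,y} else 0)" for x y
  have anti: "P a b = - P b a" for a b
    unfolding P_def by (cases a b rule: linorder_cases) (auto simp: insert_commute)
  have diag: "P a a = 0" for a unfolding P_def by simp
  have srt: "P a b * P c d - P a c * P b d + P a d * P b c = 0"
    if "a < b" "b < c" "c < d" "d < 5" for a b c d
  proof -
    have "wedge u u {a,b,c,d} = 2 * (u{a,b} * u{c,d} - u{a,c} * u{b,d} + u{a,d} * u{b,c})"
      using F4[OF u(1) u(1) that(1-3)] by (simp add: algebra_simps)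
    then have "(0::'k) = 2 * (u{a,b} * u{c,d} - u{a,c} * u{b,d} + u{a,d} * u{b,c})" by (simp only: u(3) zero_fun_def)
    then have "u{a,b} * u{c,d} - u{a,c} * u{b,d} + u{a,d} * u{b,c} = 0" by (metis mult_eq_0_iff two)
    then show ?thesis using that by (simp add: P_def)
  qed
  have gen: "P k l * P x y - P k x * P l y + P k y * P l x = 0" if "x < 5" "y < 5" for x y
    using pl_general[of P, OF anti diag srt] kl that by simp
  define a where "a = vec (P k)"
  define b where "b = vec (P l)"
  have ab: "wedge a b = escale (u {k,l}) u"
  proof (rule ext2)
    show "wedge a b \<in> G 2" unfolding a_def b_def using G11 vec_G1 by blast
    show "escale (u {k,l}) u \<in> G 2" using G_scale u(1) by blast
    fix x y :: nat assume xy: "x < y" "y < 5"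
    then have "wedge a b {x,y} = P k x * P l y - P k y * P l x"
      unfolding a_def b_def using F2[OF vec_G1 vec_G1 xy(1)] by (simp add: vec_at)
    also have "\<dots> = P k l * P x y" using gen[of x y] xy by (simp add: algebra_simps)
    also have "\<dots> = u {k,l} * u {x,y}" using kl xy by (simp add: P_def)
    finally show "wedge a b {x,y} = escale (u {k,l}) u {x,y}" by simp
  qed
  have "wedge (escale (1 / u {k,l}) a) b = escale (1 / u {k,l}) (escale (u {k,l}) u)"
    by (simp only: wedge_scale_left ab)
  also have "\<dots> = u" using kl(3) by (simp add: escale_def fun_eq_iff)
  finally have "u = wedge (escale (1 / u {k,l}) a) b" by simp
  moreover have "escale (1 / u {k,l}) a \<in> G 1" "b \<in> G 1" unfolding a_def b_def using G_scale vec_G1 by blast+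
  ultimately show ?thesis by blast
qed

lemma EL2:
  assumes a: "a \<in> G 1" and b: "b \<in> G 1" and z: "z \<in> G 1"
    and h: "wedge (wedge a b) z = 0" and nz: "wedge a b \<noteq> 0"
  shows "\<exists>\<alpha> \<beta>. z = escale \<alpha> a + escale \<beta> b"
proof -
  obtain i j where ij: "i < j" "j < 5" "wedge a b {i,j} \<noteq> 0" using nonzero2[OF G11[OF a b] nz] by blast
  define Q where "Q = a{i} * b{j} - a{j} * b{i}"
  have Q: "Q \<noteq> 0" using ij F2[OF a b ij(1)] by (simp add: Q_def)
  define p where "p = z{i} * b{j} - z{j} * b{i}"
  define q where "q = a{i} * z{j} - a{j} * z{i}"
  have key: "z{m} * Q = p * a{m} + q * b{m}" if m: "m < 5" for m
  proof -
    consider "m = i" | "m = j" | "m < i" | "i < m" "m < j" | "j < m" using ij by linarith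
    then show ?thesis
    proof cases
      case 1 then show ?thesis by (simp add: Q_def p_def q_def algebra_simps)
    next
      case 2 then show ?thesis by (simp add: Q_def p_def q_def algebra_simps)
    next
      case 3
      have "wedge (wedge a b) z {m,i,j} = 0" by (simp add: h)
      then have "(a{m}*b{i} - a{i}*b{m})*z{j} - (a{m}*b{j} - a{j}*b{m})*z{i} + (a{i}*b{j} - a{j}*b{i})*z{m} = 0"
        using W3[OF a b z 3 ij(1)] by simp
      then show ?thesis unfolding Q_def p_def q_def by algebra
    next
      case 4
      have "wedge (wedge a b) z {i,m,j} = 0" by (simp add: h)
      then have "(a{i}*b{m} - a{m}*b{i})*z{j} - (a{i}*b{j} - a{j}*b{i})*z{m} + (a{m}*b{j} - a{j}*b{m})*z{i} = 0"
        using W3[OF a b z 4] by simp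
      then show ?thesis unfolding Q_def p_def q_def by algebra
    next
      case 5
      have "wedge (wedge a b) z {i,j,m} = 0" by (simp add: h)
      then have "(a{i}*b{j} - a{j}*b{i})*z{m} - (a{i}*b{m} - a{m}*b{i})*z{j} + (a{j}*b{m} - a{m}*b{j})*z{i} = 0"
        using W3[OF a b z ij(1) 5] by simp
      then show ?thesis unfolding Q_def p_def q_def by algebra
    qed
  qed
  have "z = escale (p / Q) a + escale (q / Q) b"
  proof (rule ext1[OF z G1_lin[OF a b]])
    fix m :: nat assume "m < 5"
    then show "z {m} = (escale (p / Q) a + escale (q / Q) b) {m}"
      using key[of m] Q by (simp add: field_simps)
  qed
  then show ?thesis by blast
qed


definition D3 :: "'k::field ext \<Rightarrow> 'k ext \<Rightarrow> 'k ext \<Rightarrow> nat \<Rightarrow> nat \<Rightarrow> nat \<Rightarrow> 'k" where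
  "D3 x y w i j k = (x{i}*y{j} - x{j}*y{i})*w{k} - (x{i}*y{k} - x{k}*y{i})*w{j} + (x{j}*y{k} - x{k}*y{j})*w{i}"

lemma EL3:
  assumes a: "a \<in> G 1" and b: "b \<in> G 1" and c: "c \<in> G 1" and z: "z \<in> G 1"
    and h: "wedge (wedge a b) (wedge c z) = 0" and nz: "wedge (wedge a b) c \<noteq> 0"
  shows "\<exists>\<alpha> \<beta> \<gamma>. z = escale \<alpha> a + escale \<beta> b + escale \<gamma> c"
proof -
  obtain i j k where ijk: "i < j" "j < k" "k < 5" "wedge (wedge a b) c {i,j,k} \<noteq> 0"
    using nonzero3[OF G21[OF G11[OF a b] c] nz] by blast
  define R where "R = D3 a b c i j k"
  have R: "R \<noteq> 0" using ijk W3[OF a b c ijk(1,2)] by (simp add: R_def D3_def)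
  define p where "p = D3 z b c i j k"
  define q where "q = D3 a z c i j k"
  define r where "r = D3 a b z i j k"
  have key: "z{m} * R = p * a{m} + q * b{m} + r * c{m}" if m: "m < 5" for m
  proof -
    consider "m = i" | "m = j" | "m = k" | "m < i" | "i < m" "m < j" | "j < m" "m < k" | "k < m" using ijk by linarith
    then show ?thesis
    proof cases
      case 1 then show ?thesis by (simp add: R_def p_def q_def r_def D3_def algebra_simps)
    next
      case 2 then show ?thesis by (simp add: R_def p_def q_def r_def D3_def algebra_simps)
    next
      case 3 then show ?thesis by (simp add: R_def p_def q_def r_def D3_def algebra_simps)
    next
      case 4
      have "wedge (wedge a b) (wedge c z) {m,i,j,k} = 0" by (simp add: h)
      note e = this[unfolded W4[OF a b c z 4 ijk(1,2)]]
      show ?thesis using e unfolding R_def p_def q_def r_def D3_def by algebra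
    next
      case 5
      have "wedge (wedge a b) (wedge c z) {i,m,j,k} = 0" by (simp add: h)
      note e = this[unfolded W4[OF a b c z 5 ijk(2)]]
      show ?thesis using e unfolding R_def p_def q_def r_def D3_def by algebra
    next
      case 6
      have "wedge (wedge a b) (wedge c z) {i,j,m,k} = 0" by (simp add: h)
      note e = this[unfolded W4[OF a b c z ijk(1) 6]]
      show ?thesis using e unfolding R_def p_def q_def r_def D3_def by algebra
    next
      case 7
      have "wedge (wedge a b) (wedge c z) {i,j,k,m} = 0" by (simp add: h)
      note e = this[unfolded W4[OF a b c z ijk(1,2) 7]]
      show ?thesis using e unfolding R_def p_def q_def r_def D3_def by algebra
    qed
  qed
  have "z = escale (p / R) a + escale (q / R) b + escale (r / R) c"
  proof (rule ext1[OF z G_add[OF G1_lin[OF a b] G_scale[OF c]]])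
    fix m :: nat assume "m < 5"
    then show "z {m} = (escale (p / R) a + escale (q / R) b + escale (r / R) c) {m}"
      using key[of m] R by (simp add: field_simps)
  qed
  then show ?thesis by blast
qed


lemma RW:
  assumes a: "a \<in> G 1" and b: "b \<in> G 1" and f: "f = escale \<alpha> a + escale \<beta> b" and nz: "f \<noteq> 0"
  shows "\<exists>x. x \<in> G 1 \<and> wedge a b = wedge f x"
proof (cases "\<alpha> = 0")
  case False
  have "wedge a b = wedge f (escale (1/\<alpha>) b)"
  proof (rule ext2[OF G11[OF a b] G11[OF _ G_scale[OF b]]])
    show "f \<in> G 1" unfolding f using G1_lin[OF a b] .
    fix i j :: nat assume "i < j" "j < 5"
    have e2: "wedge f (escale (1/\<alpha>) b) {i,j} = (\<alpha> * a{i} + \<beta> * b{i}) * (1/\<alpha> * b{j}) - (\<alpha> * a{j} + \<beta> * b{j}) * (1/\<alpha> * b{i})"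
      using F2[OF G1_lin[OF a b] G_scale[OF b] \<open>i<j\<close>, of \<alpha> \<beta> "1/\<alpha>"] by (simp add: f)
    show "wedge a b {i,j} = wedge f (escale (1/\<alpha>) b) {i,j}"
      unfolding e2 F2[OF a b \<open>i<j\<close>] using False by (simp add: field_simps)
  qed
  then show ?thesis using G_scale[OF b] by blast
next
  case True
  then have f': "f = escale \<beta> b" using f by (simp add: escale_def fun_eq_iff)
  then have bnz: "\<beta> \<noteq> 0" using nz by (auto simp: escale_def fun_eq_iff)
  have "wedge a b = wedge f (escale (-1/\<beta>) a)"
  proof (rule ext2[OF G11[OF a b] G11[OF _ G_scale[OF a]]])
    show "f \<in> G 1" unfolding f' using G_scale[OF b] .
    fix i j :: nat assume "i < j" "j < 5"
    have e2: "wedge f (escale (-1/\<beta>) a) {i,j} = (\<beta> * b{i}) * (-1/\<beta> * a{j}) - (\<beta> * b{j}) * (-1/\<beta> * a{i})"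
      using F2[OF G_scale[OF b] G_scale[OF a] \<open>i<j\<close>, of \<beta> "-1/\<beta>"] by (simp add: f')
    show "wedge a b {i,j} = wedge f (escale (-1/\<beta>) a) {i,j}"
      unfolding e2 F2[OF a b \<open>i<j\<close>] using bnz by (simp add: field_simps)
  qed
  then show ?thesis using G_scale[OF a] by blast
qed

lemma L2:
  assumes a: "a \<in> G 1" and b: "b \<in> G 1" and c: "c \<in> G 1" and d: "d \<in> G 1"
    and h: "wedge (wedge a b) (wedge c d) = 0" and nz1: "wedge a b \<noteq> 0" and nz2: "wedge c d \<noteq> 0"
  shows "\<exists>f x y. f \<in> G 1 \<and> x \<in> G 1 \<and> y \<in> G 1 \<and> f \<noteq> 0 \<and> wedge a b = wedge f x \<and> wedge c d = wedge f y"
proof (cases "wedge (wedge a b) c = 0")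
  case True
  obtain \<alpha> \<beta> where cab: "c = escale \<alpha> a + escale \<beta> b" using EL2[OF a b c True nz1] by blast
  have "c \<noteq> 0" using nz2 by auto
  then obtain x where "x \<in> G 1" "wedge a b = wedge c x" using RW[OF a b cab] by blast
  then show ?thesis using c d \<open>c \<noteq> 0\<close> by blast
next
  case False
  obtain \<alpha> \<beta> \<gamma> where dabc: "d = escale \<alpha> a + escale \<beta> b + escale \<gamma> c" using EL3[OF a b c d h False] by blast
  define f where "f = escale \<alpha> a + escale \<beta> b"
  have fG: "f \<in> G 1" unfolding f_def using G1_lin[OF a b] .
  have d': "d = f + escale \<gamma> c" using dabc f_def by simp
  have cd: "wedge c d = wedge c f"
    unfolding d' wedge_add_right wedge_scale_right wedge_self1[OF c] by (simp add: escale_def zero_fun_def)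
  have fnz: "f \<noteq> 0"
  proof
    assume "f = 0"
    then have "wedge c d = 0" using cd by simp
    then show False using nz2 by simp
  qed
  obtain x where x: "x \<in> G 1" "wedge a b = wedge f x" using RW[OF a b f_def fnz] by blast
  have "wedge c d = wedge f (- c)" unfolding cd wedge_minus_right wedge_anti1[OF fG c] ..
  then show ?thesis using x fG fnz G_neg[OF c] by blast
qed

lemma KER:
  assumes X: "X \<in> G 3" and e: "e \<in> G 1" and h: "wedge X e = 0" and ek: "e {k} \<noteq> 0"
    and vk: "\<And>S. k \<in> S \<Longrightarrow> X S = 0"
  shows "X = 0"
proof
  fix S show "X S = 0 S"
  proof (rule ccontr)
    assume nz: "X S \<noteq> 0 S"
    then have "X S \<noteq> 0" by simp
    then have S: "S \<subseteq> {..<5}" "card S = 3" using X unfolding ext_grade_def by auto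
    then have fin: "finite S" by (metis card.infinite zero_neq_numeral)
    have kS: "k \<notin> S" using vk \<open>X S \<noteq> 0\<close> by blast
    define T where "T = insert k S"
    have finT: "finite T" using fin by (simp add: T_def)
    have "wedge X e T = (\<Sum>m\<in>T. shuffle_sign (T - {m}) {m} * X (T - {m}) * e {m})"
      using wedge_G1_right[OF e finT] .
    also have "\<dots> = shuffle_sign (T - {k}) {k} * X (T - {k}) * e {k}
        + (\<Sum>m\<in>T - {k}. shuffle_sign (T - {m}) {m} * X (T - {m}) * e {m})"
      using finT by (subst sum.remove[of T k]) (auto simp: T_def)
    also have "(\<Sum>m\<in>T - {k}. shuffle_sign (T - {m}) {m} * X (T - {m}) * e {m}) = 0"
      by (rule sum.neutral) (auto simp: T_def intro!: vk)
    also have "T - {k} = S" using kS by (auto simp: T_def)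
    finally have "wedge X e T = shuffle_sign S {k} * X S * e {k}" by simp
    then have "shuffle_sign S {k} * X S * e {k} = 0" using h by simp
    then show False using \<open>X S \<noteq> 0\<close> ek by simp
  qed
qed

lemma gen_e:
  assumes e: "e \<in> G 1" and x: "x \<in> G 1" and v: "v \<in> G 1"
  shows "wedge (wedge (wedge e x) v) e = 0"
proof (rule ext4)
  show "wedge (wedge (wedge e x) v) e \<in> G 4" using G31[OF G21[OF G11[OF e x] v] e] .
  fix i j k l :: nat assume o: "i < j" "j < k" "k < l" "l < 5"
  have o2: "i < k" "j < l" "i < l" using o by simp_all
  show "wedge (wedge (wedge e x) v) e {i,j,k,l} = 0 {i,j,k,l}"
    unfolding F4'[OF G21[OF G11[OF e x] v] e o(1-3)] W3[OF e x v o(1,2)] W3[OF e x v o(1) o(3)[THEN less_trans[OF o(2)]]]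
      W3[OF e x v o2(1) o(3)] W3[OF e x v o(2,3)]
    by (simp add: algebra_simps)
qed simp


lemma card_F:
  assumes k: "k < (5::nat)"
  shows "card {S. S \<subseteq> {..<5} \<and> card S = 3 \<and> k \<in> S} = 6"
proof -
  have eq: "{S. S \<subseteq> {..<5} \<and> card S = 3 \<and> k \<in> S} = insert k ` {T. T \<subseteq> {..<5} - {k} \<and> card T = 2}"
  proof (intro equalityI subsetI)
    fix S assume "S \<in> {S. S \<subseteq> {..<5} \<and> card S = 3 \<and> k \<in> S}"
    then have S: "S \<subseteq> {..<5}" "card S = 3" "k \<in> S" by auto
    then have "finite S" by (metis card.infinite zero_neq_numeral)
    then have "card (S - {k}) = 2" using S by simp
    moreover have "S = insert k (S - {k})" using S by auto
    ultimately show "S \<in> insert k ` {T. T \<subseteq> {..<5} - {k} \<and> card T = 2}" using S by blast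
  next
    fix S assume "S \<in> insert k ` {T. T \<subseteq> {..<5} - {k} \<and> card T = 2}"
    then obtain T where T: "S = insert k T" "T \<subseteq> {..<5} - {k}" "card T = 2" by auto
    then have "finite T" by (metis card.infinite zero_neq_numeral)
    moreover have "k \<notin> T" using T by auto
    ultimately have "card S = 3" using T by simp
    then show "S \<in> {S. S \<subseteq> {..<5} \<and> card S = 3 \<and> k \<in> S}" using T k by auto
  qed
  have inj: "inj_on (insert k) {T. T \<subseteq> {..<5} - {k} \<and> card T = 2}"
    by (auto simp: inj_on_def)
  have c4: "card ({..<5::nat} - {k}) = 4" using k by simp
  have "card {T. T \<subseteq> {..<5} - {k} \<and> card T = 2} = 4 choose 2"
    using n_subsets[of "{..<5::nat} - {k}" 2] c4 by simp
  also have "(4::nat) choose 2 = 6" by (simp add: choose_two)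
  finally show ?thesis unfolding eq card_image[OF inj] .
qed


lemma sum_fun_apply: "(sum g F) T = (\<Sum>S\<in>F. g S T)"
  by (induct F rule: infinite_finite_induct) auto

lemma dim_bound:
  fixes e :: "'k::field ext"
  assumes e: "e \<in> G 1" "e \<noteq> 0"
  shows "\<exists>C. finite C \<and> card C \<le> 6 \<and> ext_span {wedge (wedge e x) v | x v. x \<in> G 1 \<and> v \<in> G 1} \<subseteq> ext.span C"
proof -
  obtain k where k: "k < 5" "e {k} \<noteq> 0" using nonzero1[OF e] by blast
  define V where "V = ext_span {wedge (wedge e x) v | x v. x \<in> G 1 \<and> v \<in> G 1}"
  have sub: "ext_subspace {X. X \<in> G 3 \<and> wedge X e = 0}"
    unfolding ext.subspace_def
    by (auto simp: wedge_add_left wedge_scale_left ext.scale_zero_right intro: G_add G_scale)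
  have "{wedge (wedge e x) v | x v. x \<in> G 1 \<and> v \<in> G 1} \<subseteq> {X. X \<in> G 3 \<and> wedge X e = 0}"
  proof
    fix Y assume "Y \<in> {wedge (wedge e x) v | x v. x \<in> G 1 \<and> v \<in> G 1}"
    then obtain x v where xv: "Y = wedge (wedge e x) v" "x \<in> G 1" "v \<in> G 1" by blast
    show "Y \<in> {X. X \<in> G 3 \<and> wedge X e = 0}"
      using G21[OF G11[OF e(1) xv(2)] xv(3)] gen_e[OF e(1) xv(2,3)] xv(1) by simp
  qed
  then have "V \<subseteq> {X. X \<in> G 3 \<and> wedge X e = 0}" unfolding V_def
    by (rule ext.span_minimal[OF _ sub])
  then have VK: "X \<in> G 3" "wedge X e = 0" if "X \<in> V" for X using that by auto
  define \<rho> where "\<rho> X = (\<lambda>S. if k \<in> S then X S else (0::'k))" for X :: "'k ext"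
  have hom: "module_hom escale escale \<rho>"
    unfolding module_hom_iff using vs[unfolded module_iff_vector_space[symmetric]]
    by (auto simp: \<rho>_def fun_eq_iff)
  have Vsub: "ext_subspace V" unfolding V_def by simp
  have inj: "inj_on \<rho> V"
  proof (rule inj_onI)
    fix X Y assume XY: "X \<in> V" "Y \<in> V" "\<rho> X = \<rho> Y"
    have D: "X - Y \<in> V" using ext.subspace_diff[OF Vsub XY(1,2)] .
    have "(X - Y) S = 0" if "k \<in> S" for S
      using fun_cong[OF XY(3), of S] that by (simp add: \<rho>_def)
    then have "X - Y = 0" using KER[OF VK(1)[OF D] e(1) VK(2)[OF D] k(2)] by blast
    then show "X = Y" by simp
  qed
  obtain B where B: "B \<subseteq> V" "ext.independent B" "V \<subseteq> ext.span B" "card B = ext.dim V"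
    using ext.basis_exists by blast
  have spanB: "ext.span B \<subseteq> V" using ext.span_minimal[OF B(1) Vsub] .
  have indep: "ext.independent (\<rho> ` B)"
    using module_hom.independent_injective_image[OF hom B(2) inj_on_subset[OF inj spanB]] .
  define F where "F = {S. S \<subseteq> {..<5} \<and> card S = 3 \<and> k \<in> S}"
  define Eb where "Eb S = (\<lambda>T. if T = S then (1::'k) else 0)" for S :: "nat set"
  have fin: "finite F" unfolding F_def
    by (rule finite_subset[of _ "Pow {..<5}"]) auto
  have sp: "\<rho> ` B \<subseteq> ext.span (Eb ` F)"
  proof
    fix Z assume "Z \<in> \<rho> ` B"
    then obtain X where X: "X \<in> B" "Z = \<rho> X" by blast
    have XG: "X \<in> G 3" using VK(1) B(1) X(1) by blast
    have "\<rho> X = (\<Sum>S\<in>F. escale (X S) (Eb S))"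
    proof
      fix T
      have "(\<Sum>S\<in>F. escale (X S) (Eb S)) T = (\<Sum>S\<in>F. if S = T then X T else 0)"
        unfolding sum_fun_apply by (rule sum.cong) (auto simp: Eb_def)
      also have "\<dots> = (if T \<in> F then X T else 0)" using fin by simp
      also have "\<dots> = \<rho> X T" using XG unfolding \<rho>_def F_def ext_grade_def by auto
      finally show "\<rho> X T = (\<Sum>S\<in>F. escale (X S) (Eb S)) T" by simp
    qed
    moreover have "(\<Sum>S\<in>F. escale (X S) (Eb S)) \<in> ext.span (Eb ` F)"
      by (intro ext.span_sum ext.span_scale ext.span_base imageI)
    ultimately show "Z \<in> ext.span (Eb ` F)" unfolding X(2) by simp
  qed
  have finB: "finite (\<rho> ` B)" using ext.independent_span_bound[OF _ indep sp] fin by auto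
  have "card (\<rho> ` B) \<le> card (Eb ` F)" using ext.independent_span_bound[OF _ indep sp] fin by auto
  also have "\<dots> \<le> card F" using card_image_le fin by blast
  also have "\<dots> = 6" unfolding F_def using card_F[OF k(1)] .
  finally have "card (\<rho> ` B) \<le> 6" .
  moreover have "card (\<rho> ` B) = card B" using card_image inj_on_subset[OF inj B(1)] by blast
  moreover have "finite B" using finB inj_on_subset[OF inj B(1)] finite_imageD by blast
  ultimately show ?thesis using B(3) V_def by auto
qed

lemma bilin_span:
  assumes T: "ext_subspace T" and AB: "\<And>a b. a \<in> A \<Longrightarrow> b \<in> B \<Longrightarrow> wedge a b \<in> T"
    and p: "p \<in> ext_span A" and q: "q \<in> ext_span B"
  shows "wedge p q \<in> T"
proof -
  have L: "wedge p b \<in> T" if b: "b \<in> B" for b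
  proof -
    have "ext_subspace {p. wedge p b \<in> T}"
      unfolding ext.subspace_def using T
      by (auto simp: wedge_add_left wedge_scale_left intro: ext.subspace_add ext.subspace_scale ext.subspace_0)
    moreover have "A \<subseteq> {p. wedge p b \<in> T}" using AB b by blast
    ultimately have "ext_span A \<subseteq> {p. wedge p b \<in> T}" by (rule ext.span_minimal[rotated])
    then show ?thesis using p by blast
  qed
  have "ext_subspace {q. wedge p q \<in> T}"
    unfolding ext.subspace_def using T
    by (auto simp: wedge_add_right wedge_scale_right intro: ext.subspace_add ext.subspace_scale ext.subspace_0)
  moreover have "B \<subseteq> {q. wedge p q \<in> T}" using L by blast
  ultimately have "ext_span B \<subseteq> {q. wedge p q \<in> T}" by (rule ext.span_minimal[rotated])
  then show ?thesis using q by blast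
qed

lemma lin_right: "a \<in> G 1 \<Longrightarrow> b \<in> G 1 \<Longrightarrow> wedge a (escale \<alpha> a + escale \<beta> b) = escale \<beta> (wedge a b)"
  by (simp add: wedge_add_right wedge_scale_right wedge_self1 ext.scale_zero_right)

lemma lin_left: "a \<in> G 1 \<Longrightarrow> b \<in> G 1 \<Longrightarrow> wedge (escale \<alpha> a + escale \<beta> b) b = escale \<alpha> (wedge a b)"
  by (simp add: wedge_add_left wedge_scale_left wedge_self1 ext.scale_zero_right)

lemma span2: assumes "v \<in> ext_span {x, y}" shows "\<exists>\<alpha> \<beta>. v = escale \<alpha> x + escale \<beta> y"
proof -
  obtain k where "v - escale k x \<in> ext_span {y}" using assms ext.span_breakdown_eq by blast
  then obtain m where "v - escale k x = escale m y" using ext.span_singleton by blast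
  then have "v = escale k x + escale m y" by (simp add: algebra_simps)
  then show ?thesis by blast
qed

lemma forward:
  assumes W: "ext_subspace W" "W \<subseteq> G 1" "ext_dim W = 3" and U: "U \<subseteq> wedge_sp W W"
  shows "\<forall>u\<in>U. \<forall>u'\<in>U. wedge u u' = 0"
proof -
  obtain B where B: "B \<subseteq> W" "ext.independent B" "W \<subseteq> ext.span B" "card B = ext.dim W"
    using ext.basis_exists by blast
  then obtain x y z where xyz: "B = {x,y,z}" using W(3) by (auto simp: card_3_iff)
  have G: "x \<in> G 1" "y \<in> G 1" "z \<in> G 1" using B(1) W(2) xyz by auto
  define S2 where "S2 = ext_span {wedge x y, wedge x z, wedge y z}"
  have base1: "wedge a b \<in> S2" if "a \<in> {x,y,z}" "b \<in> {x,y,z}" for a b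
  proof -
    have s: "wedge x y \<in> S2" "wedge x z \<in> S2" "wedge y z \<in> S2" unfolding S2_def by (auto intro: ext.span_base)
    have "wedge y x \<in> S2" "wedge z x \<in> S2" "wedge z y \<in> S2"
      using s ext.span_neg[of _ "{wedge x y, wedge x z, wedge y z}"] wedge_anti1 G unfolding S2_def by metis+
    moreover have "wedge x x \<in> S2" "wedge y y \<in> S2" "wedge z z \<in> S2"
      using wedge_self1 G ext.span_zero unfolding S2_def by metis+
    ultimately show ?thesis using s that by auto
  qed
  have WS2: "wedge_sp W W \<subseteq> S2" unfolding wedge_sp_def
  proof (rule ext.span_minimal)
    show "ext_subspace S2" unfolding S2_def by simp
    show "{wedge u v |u v. u \<in> W \<and> v \<in> W} \<subseteq> S2"
    proof
      fix t assume "t \<in> {wedge u v |u v. u \<in> W \<and> v \<in> W}"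
      then obtain u v where uv: "t = wedge u v" "u \<in> W" "v \<in> W" by blast
      have "u \<in> ext_span {x,y,z}" "v \<in> ext_span {x,y,z}" using uv B(3) xyz by auto
      then show "t \<in> S2" unfolding uv(1) using bilin_span[of S2 "{x,y,z}" "{x,y,z}"] base1
        unfolding S2_def by auto
    qed
  qed
  have base2: "wedge p q \<in> {0}" if "p \<in> {wedge x y, wedge x z, wedge y z}" "q \<in> {wedge x y, wedge x z, wedge y z}" for p q
    using that wedge_share G by auto
  have sub0: "ext_subspace {0 :: 'a ext}" unfolding ext.subspace_def by (simp add: ext.scale_zero_right)
  show ?thesis
  proof (intro ballI)
    fix u u' assume "u \<in> U" "u' \<in> U"
    then have "u \<in> S2" "u' \<in> S2" using U WS2 by auto
    then have "wedge u u' \<in> {0}" using bilin_span[OF sub0 base2] unfolding S2_def by blast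
    then show "wedge u u' = 0" by simp
  qed
qed

lemma indep3:
  assumes f: "f \<in> G 1" and x: "x \<in> G 1" and y: "y \<in> G 1" and nz: "wedge (wedge f x) y \<noteq> 0"
  shows "ext.independent {f,x,y}" "f \<noteq> x" "f \<noteq> y" "x \<noteq> y"
proof -
  show fx: "f \<noteq> x" using nz wedge_self1[OF f] by auto
  show fy: "f \<noteq> y" using nz wedge_aba[OF f x] by auto
  show xy: "x \<noteq> y" using nz wedge_abb[OF f x] by auto
  have y0: "y \<noteq> 0" using nz by auto
  have xny: "x \<notin> ext.span {y}"
  proof
    assume "x \<in> ext.span {y}"
    then obtain \<beta> where "x = escale \<beta> y" using ext.span_singleton by blast
    then have "wedge (wedge f x) y = escale \<beta> (wedge (wedge f y) y)"
      by (simp add: wedge_scale_right wedge_scale_left)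
    then show False using nz wedge_abb[OF f y] by (simp add: ext.scale_zero_right)
  qed
  have fnxy: "f \<notin> ext.span {x,y}"
  proof
    assume "f \<in> ext.span {x,y}"
    then obtain \<alpha> \<beta> where fe: "f = escale \<alpha> x + escale \<beta> y" using span2 by blast
    have "wedge f x = escale \<beta> (wedge y x)"
      unfolding fe wedge_add_left wedge_scale_left wedge_self1[OF x] by (simp add: ext.scale_zero_right)
    then have "wedge (wedge f x) y = escale \<beta> (wedge (wedge y x) y)" by (simp add: wedge_scale_left)
    then show False using nz wedge_aba[OF y x] by (simp add: ext.scale_zero_right)
  qed
  show "ext.independent {f,x,y}"
    using fx fy xy y0 xny fnxy by (simp add: ext.independent_insert)
qed


theorem lemma5p4:
  fixes U :: "('k::alg_closed_field) ext set"
  assumes "(2::'k) \<noteq> 0"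
    and "ext_subspace U" and "U \<subseteq> ext_grade 2" and "ext_dim U = 3"
    and "ext_dim (wedge_sp U (ext_grade 1)) \<ge> 7"
  shows "(\<exists>W. ext_subspace W \<and> W \<subseteq> ext_grade 1 \<and> ext_dim W = 3 \<and> U \<subseteq> wedge_sp W W)
     \<longleftrightarrow> (\<forall>u\<in>U. \<forall>u'\<in>U. wedge u u' = 0)"
proof
  assume "\<exists>W. ext_subspace W \<and> W \<subseteq> ext_grade 1 \<and> ext_dim W = 3 \<and> U \<subseteq> wedge_sp W W"
  then obtain W where "ext_subspace W" "W \<subseteq> G 1" "ext_dim W = 3" "U \<subseteq> wedge_sp W W" by blast
  then show "\<forall>u\<in>U. \<forall>u'\<in>U. wedge u u' = 0" by (rule forward)
next
  note two = assms(1) and UG = assms(3) and Ud = assms(4) and big = assms(5)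
  assume H: "\<forall>u\<in>U. \<forall>u'\<in>U. wedge u u' = 0"
  obtain B where B: "B \<subseteq> U" "ext.independent B" "U \<subseteq> ext.span B" "card B = ext.dim U"
    using ext.basis_exists by blast
  then obtain u1 u2 u3 where u: "B = {u1,u2,u3}" "u1 \<noteq> u2" "u2 \<noteq> u3" "u1 \<noteq> u3"
    using Ud by (auto simp: card_3_iff)
  have uU: "u1 \<in> U" "u2 \<in> U" "u3 \<in> U" using B(1) u(1) by auto
  have uG: "u1 \<in> G 2" "u2 \<in> G 2" "u3 \<in> G 2" using uU UG by auto
  have "0 \<notin> B" using B(2) ext.dependent_zero by blast
  then have nz: "u1 \<noteq> 0" "u2 \<noteq> 0" "u3 \<noteq> 0" using u(1) by auto
  have indepB: "\<not> (a \<in> ext.span (B - {a}))" if "a \<in> B" for a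
    using B(2) that unfolding ext.dependent_def by blast
  have n2: "u2 \<notin> ext.span {u1}"
  proof
    assume "u2 \<in> ext.span {u1}"
    moreover have "ext.span {u1} \<subseteq> ext.span (B - {u2})" using u by (intro ext.span_mono) auto
    ultimately show False using indepB[of u2] u(1) by auto
  qed
  have hh: "wedge ui uj = 0" if "ui \<in> U" "uj \<in> U" for ui uj using H that by blast
  obtain a1 b1 where ab1: "a1 \<in> G 1" "b1 \<in> G 1" "u1 = wedge a1 b1" using DEC[OF two uG(1) nz(1) hh] uU by blast
  obtain a2 b2 where ab2: "a2 \<in> G 1" "b2 \<in> G 1" "u2 = wedge a2 b2" using DEC[OF two uG(2) nz(2) hh] uU by blast
  obtain a3 b3 where ab3: "a3 \<in> G 1" "b3 \<in> G 1" "u3 = wedge a3 b3" using DEC[OF two uG(3) nz(3) hh] uU by blast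
  obtain f x y where fxy: "f \<in> G 1" "x \<in> G 1" "y \<in> G 1" "f \<noteq> 0" "u1 = wedge f x" "u2 = wedge f y"
    using L2[OF ab1(1,2) ab2(1,2)] hh[OF uU(1,2)] nz(1,2) ab1(3) ab2(3) by metis
  have fxy_nz: "wedge (wedge f x) y \<noteq> 0"
  proof
    assume z: "wedge (wedge f x) y = 0"
    obtain \<alpha> \<beta> where "y = escale \<alpha> f + escale \<beta> x" using EL2[OF fxy(1,2,3) z] nz(1) fxy(5) by blast
    then have "u2 = escale \<beta> u1" using fxy lin_right by metis
    then have "u2 \<in> ext.span {u1}" by (simp add: ext.span_base ext.span_scale)
    then show False using n2 by blast
  qed
  obtain g x' z where gz: "g \<in> G 1" "x' \<in> G 1" "z \<in> G 1" "g \<noteq> 0" "u1 = wedge g x'" "u3 = wedge g z"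
    using L2[OF fxy(1,2) ab3(1,2)] hh[OF uU(1,3)] nz(1,3) fxy(5) ab3(3) by metis
  have "wedge (wedge f x) g = 0" using wedge_aba[OF gz(1,2)] gz(5) fxy(5) by simp
  then obtain \<alpha>1 \<beta>1 where g_eq: "g = escale \<alpha>1 f + escale \<beta>1 x" using EL2[OF fxy(1,2) gz(1)] nz(1) fxy(5) by blast
  obtain h y' z' where hz: "h \<in> G 1" "y' \<in> G 1" "z' \<in> G 1" "h \<noteq> 0" "u2 = wedge h y'" "u3 = wedge h z'"
    using L2[OF fxy(1,3) gz(1,3)] hh[OF uU(2,3)] nz(2,3) fxy(6) gz(6) by metis
  have "wedge (wedge f y) h = 0" using wedge_aba[OF hz(1,2)] hz(5) fxy(6) by simp
  then obtain \<alpha>2 \<beta>2 where h_eq: "h = escale \<alpha>2 f + escale \<beta>2 y" using EL2[OF fxy(1,3) hz(1)] nz(2) fxy(6) by blast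
  have "wedge (wedge g z) h = 0" using wedge_aba[OF hz(1,3)] hz(6) gz(6) by simp
  then obtain \<gamma> \<delta> where h_eq2: "h = escale \<gamma> g + escale \<delta> z" using EL2[OF gz(1,3) hz(1)] nz(3) gz(6) by blast
  have gh: "wedge g h = escale \<delta> u3" using lin_right[OF gz(1,3)] h_eq2 gz(6) by simp
  show "\<exists>W. ext_subspace W \<and> W \<subseteq> ext_grade 1 \<and> ext_dim W = 3 \<and> U \<subseteq> wedge_sp W W"
  proof (cases "\<delta> = 0")
    case False
    define W where "W = ext_span {f, x, y}"
    have sW: "ext_subspace W" unfolding W_def by simp
    have fW: "f \<in> W" "x \<in> W" "y \<in> W" unfolding W_def by (auto intro: ext.span_base)
    have gW: "g \<in> W" unfolding g_eq using fW sW by (intro ext.subspace_add ext.subspace_scale)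
    have hW: "h \<in> W" unfolding h_eq using fW sW by (intro ext.subspace_add ext.subspace_scale)
    have "wedge (escale (1/\<delta>) g) h = escale (1/\<delta>) (escale \<delta> u3)"
      by (simp only: wedge_scale_left gh)
    also have "\<dots> = u3" using False by (simp add: escale_def fun_eq_iff)
    finally have u3': "u3 = wedge (escale (1/\<delta>) g) h" by simp
    have WG: "W \<subseteq> G 1" unfolding W_def using fxy(1-3) grade_subspace by (intro ext.span_minimal) auto
    have iW: "ext.independent {f,x,y}" "f \<noteq> x" "f \<noteq> y" "x \<noteq> y" using indep3[OF fxy(1-3) fxy_nz] by auto
    have dW: "ext_dim W = 3" unfolding W_def using ext.dim_span_eq_card_independent[OF iW(1)] iW(2-4) by simp
    have "B \<subseteq> wedge_sp W W" unfolding wedge_sp_def u(1)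
    proof (intro insert_subsetI empty_subsetI ext.span_base)
      show "u1 \<in> {wedge u v |u v. u \<in> W \<and> v \<in> W}" using fxy(5) fW by blast
      show "u2 \<in> {wedge u v |u v. u \<in> W \<and> v \<in> W}" using fxy(6) fW by blast
      show "u3 \<in> {wedge u v |u v. u \<in> W \<and> v \<in> W}" using u3' gW hW ext.subspace_scale[OF sW gW] by blast
    qed
    then have "ext.span B \<subseteq> wedge_sp W W" unfolding wedge_sp_def by (intro ext.span_minimal) auto
    then have "U \<subseteq> wedge_sp W W" using B(3) by blast
    then show ?thesis using sW WG dW by blast
  next
    case True
    have h_g: "h = escale \<gamma> g" using h_eq2 True by (simp add: escale_def fun_eq_iff)
    then have \<gamma>: "\<gamma> \<noteq> 0" using hz(4) by (auto simp: escale_def fun_eq_iff)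
    have "g = escale (1/\<gamma>) h" using h_g \<gamma> by (simp add: escale_def fun_eq_iff)
    then have g_eq2: "g = escale (\<alpha>2/\<gamma>) f + escale (\<beta>2/\<gamma>) y" unfolding h_eq by (simp add: escale_def fun_eq_iff algebra_simps)
    have "wedge f g = escale \<beta>1 (wedge f x)" unfolding g_eq using lin_right[OF fxy(1,2)] .
    moreover have "wedge f g = escale (\<beta>2/\<gamma>) (wedge f y)" unfolding g_eq2 using lin_right[OF fxy(1,3)] .
    ultimately have "escale \<beta>1 (wedge (wedge f x) y) = escale (\<beta>2/\<gamma>) (wedge (wedge f y) y)"
      by (metis wedge_scale_left)
    then have "escale \<beta>1 (wedge (wedge f x) y) = 0" using wedge_abb[OF fxy(1,3)] by (simp add: ext.scale_zero_right)
    then have "\<beta>1 = 0" using fxy_nz by simp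
    then have g_f: "g = escale \<alpha>1 f" using g_eq by (simp add: escale_def fun_eq_iff)
    define z3 where "z3 = escale \<alpha>1 z"
    have z3G: "z3 \<in> G 1" unfolding z3_def using G_scale[OF gz(3)] .
    have u3f: "u3 = wedge f z3" unfolding z3_def gz(6) g_f by (simp add: wedge_scale_left wedge_scale_right)
    define Sf where "Sf = {wedge f w | w. w \<in> G 1}"
    have "B \<subseteq> Sf" unfolding Sf_def u(1) using fxy(2,3,5,6) u3f z3G by blast
    then have USf: "U \<subseteq> ext_span Sf" using B(3) ext.span_mono by blast
    define Vf where "Vf = ext_span {wedge (wedge f w) v | w v. w \<in> G 1 \<and> v \<in> G 1}"
    have "wedge_sp U (G 1) \<subseteq> Vf" unfolding wedge_sp_def
    proof (rule ext.span_minimal)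
      show "ext_subspace Vf" unfolding Vf_def by simp
      show "{wedge u v |u v. u \<in> U \<and> v \<in> G 1} \<subseteq> Vf"
      proof
        fix t assume "t \<in> {wedge u v |u v. u \<in> U \<and> v \<in> G 1}"
        then obtain u v where uv: "t = wedge u v" "u \<in> U" "v \<in> G 1" by blast
        have base: "wedge a b \<in> Vf" if "a \<in> Sf" "b \<in> G 1" for a b
          using that unfolding Sf_def Vf_def by (blast intro: ext.span_base)
        show "t \<in> Vf" unfolding uv(1)
          using bilin_span[of Vf Sf "G 1", OF _ base] USf uv(2,3) ext.span_base[of v "G 1"]
          unfolding Vf_def by auto
      qed
    qed
    moreover obtain C where C: "finite C" "card C \<le> 6" "Vf \<subseteq> ext.span C"
      using dim_bound[OF fxy(1,4)] unfolding Vf_def by blast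
    ultimately have "ext_dim (wedge_sp U (G 1)) \<le> card C" using ext.dim_le_card by (meson order_trans)
    then show ?thesis using big C(2) by simp
  qed
qed


end
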